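(* Let $a,c>0$ and $z(k)=-ak^2+ik+c$ for $k\in\mathbb{R}$, and let $\sqrt{\cdot}$ denote the principal square root. Then $$\inf_{k\in\mathbb{R}}\Re\sqrt{z(k)}=\begin{cases}\sqrt{c},&4ac\le 1,\\ \frac{1}{2\sqrt a},&4ac>1,\end{cases}\qquad \sup_{k\in\mathbb{R}}\Re\sqrt{z(k)}=\begin{cases}\frac{1}{2\sqrt a},&4ac<1,\\ \sqrt{c},&4ac\ge 1.\end{cases}$$
   Context: Here $\frac{1}{2\sqrt a}=\lim_{|k|\to\infty}\Re\sqrt{z(k)}$. *)

theory Defs
  imports "HOL-Analysis.Analysis"
begin

end

theory Submission
  imports Defs "HOL-Real_Asymp.Real_Asymp"
begin

lemma inner_lim:
  fixes a c :: real assumes "a > 0" "c > 0"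
  shows "((\<lambda>k. (sqrt((c-a*k^2)^2+k^2) + (c-a*k^2))/2) \<longlongrightarrow> 1/(4*a)) at_top"
  using assms apply real_asymp
  apply (simp add: field_simps power2_eq_square)
  done

lemma outer_lim:
  fixes a c :: real assumes "a > 0" "c > 0"
  shows "((\<lambda>k. sqrt ((sqrt((c-a*k^2)^2+k^2) + (c-a*k^2))/2)) \<longlongrightarrow> 1/(2* sqrt a)) at_top"
proof -
  have "sqrt (1/(4*a)) = 1/(2* sqrt a)"
    by (simp add: real_sqrt_divide real_sqrt_mult)
  then show ?thesis using tendsto_real_sqrt[OF inner_lim[OF assms]] by simp
qed

lemma bound_ge_c:
  fixes a c t :: real assumes "a > 0" "c > 0" "t \<ge> 0" "4*a*c \<le> 1"
  shows "c \<le> (sqrt((c-a*t)^2+t) + (c-a*t))/2"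
proof -
  have m: "t*(4*a*c) \<le> t*1" using assms by (intro mult_left_mono) auto
  have "(c-a*t)^2+t - (c+a*t)^2 = t*1 - t*(4*a*c)" by (simp add: power2_eq_square algebra_simps)
  then have "(c+a*t)^2 \<le> (c-a*t)^2+t" using m by linarith
  then have "c+a*t \<le> sqrt((c-a*t)^2+t)"
    using real_le_rsqrt by blast
  then show ?thesis by simp
qed

lemma bound_le_c:
  fixes a c t :: real assumes "a > 0" "c > 0" "t \<ge> 0" "4*a*c \<ge> 1"
  shows "(sqrt((c-a*t)^2+t) + (c-a*t))/2 \<le> c"
proof -
  have m: "t*1 \<le> t*(4*a*c)" using assms by (intro mult_left_mono) auto
  have "(c-a*t)^2+t - (c+a*t)^2 = t*1 - t*(4*a*c)" by (simp add: power2_eq_square algebra_simps)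
  then have "(c-a*t)^2+t \<le> (c+a*t)^2" using m by linarith
  then have "sqrt((c-a*t)^2+t) \<le> c+a*t"
    using assms by (simp add: real_sqrt_le_iff real_le_lsqrt)
  then show ?thesis by simp
qed

lemma bound_le_a:
  fixes a c t :: real assumes "a > 0" "c > 0" "t \<ge> 0" "4*a*c \<le> 1"
  shows "(sqrt((c-a*t)^2+t) + (c-a*t))/2 \<le> 1/(4*a)"
proof -
  have h: "0 \<le> a*(a*(t*2))" using assms by simp
  have e: "0 \<le> 1/(2*a) - (c - a*t) \<longleftrightarrow> a*(c*2) \<le> 1 + a*(a*(t*2))"
    using assms by (simp add: field_simps)
  have "a*(c*2) \<le> 1 + a*(a*(t*2))" using assms h by linarith
  then have nn: "0 \<le> 1/(2*a) - (c - a*t)" using e by blast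
  have "(c-a*t)^2+t \<le> (1/(2*a) - (c - a*t))^2"
    using assms by (simp add: power2_eq_square field_simps)
  then have "sqrt((c-a*t)^2+t) \<le> 1/(2*a) - (c - a*t)"
    using nn real_le_lsqrt by blast
  then show ?thesis using assms by (simp add: field_simps)
qed

lemma bound_ge_a:
  fixes a c t :: real assumes "a > 0" "c > 0" "t \<ge> 0" "4*a*c \<ge> 1"
  shows "1/(4*a) \<le> (sqrt((c-a*t)^2+t) + (c-a*t))/2"
proof (cases "0 \<le> 1/(2*a) - (c - a*t)")
  case True
  have "(1/(2*a) - (c - a*t))^2 \<le> (c-a*t)^2+t"
    using assms by (simp add: power2_eq_square field_simps)
  then have "1/(2*a) - (c - a*t) \<le> sqrt((c-a*t)^2+t)"
    using real_le_rsqrt by blast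
  then show ?thesis using assms by (simp add: field_simps)
next
  case False
  have "c - a*t \<le> sqrt((c-a*t)^2+t)"
    using assms by (intro real_le_rsqrt) simp
  moreover have "1/(4*a) \<le> 1/(2*a)" using assms by (simp add: field_simps)
  moreover have "1/(2*a) < c - a*t" using False by simp
  moreover have "q < (s+u)/2" if "u \<le> s" "q \<le> p" "p < u" for s u p q :: real
  proof -
    have "u \<le> (s+u)/2" using that(1) by (simp add: field_simps)
    then show ?thesis using that(2,3) by linarith
  qed
  ultimately have "1/(4*a) < (sqrt((c-a*t)^2+t) + (c-a*t))/2" by blast
  then show ?thesis by simp
qed

theorem mainTheorem2:
  fixes a c :: real
  assumes "a > 0" and "c > 0"
  defines "z \<equiv> (\<lambda>k::real. - complex_of_real a * (complex_of_real k)\<^sup>2 + \<i> * complex_of_real k + complex_of_real c)"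
  shows "((INF k\<in>(UNIV::real set). Re (csqrt (z k))) =
           (if 4 * a * c \<le> 1 then sqrt c else 1 / (2 * sqrt a))) \<and>
         ((SUP k\<in>(UNIV::real set). Re (csqrt (z k))) =
           (if 4 * a * c < 1 then 1 / (2 * sqrt a) else sqrt c))"
proof -
  define F where "F = (\<lambda>k::real. sqrt ((sqrt((c-a*k^2)^2+k^2) + (c-a*k^2))/2))"
  have RF: "(\<lambda>k. Re (csqrt (z k))) = F"
    unfolding F_def z_def by (rule ext) (simp add: cmod_def power2_eq_square)
  have F0: "F 0 = sqrt c" unfolding F_def using assms by simp
  have Fr: "sqrt c \<in> range F" using F0 by (metis rangeI)
  have lim: "(F \<longlongrightarrow> 1/(2* sqrt a)) at_top"
    unfolding F_def using outer_lim[OF assms(1,2)] .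
  have sa: "sqrt (1/(4*a)) = 1/(2* sqrt a)"
    by (simp add: real_sqrt_divide real_sqrt_mult)
  have lo1: "sqrt c \<le> F k" if "4*a*c \<le> 1" for k
    unfolding F_def using bound_ge_c[OF assms(1,2) _ that, of "k^2"] by simp
  have hi1: "F k \<le> 1/(2* sqrt a)" if "4*a*c \<le> 1" for k
    unfolding F_def sa[symmetric] using bound_le_a[OF assms(1,2) _ that, of "k^2"] by simp
  have hi2: "F k \<le> sqrt c" if "4*a*c \<ge> 1" for k
    unfolding F_def using bound_le_c[OF assms(1,2) _ that, of "k^2"] by simp
  have lo2: "1/(2* sqrt a) \<le> F k" if "4*a*c \<ge> 1" for k
    unfolding F_def sa[symmetric] using bound_ge_a[OF assms(1,2) _ that, of "k^2"] by simp
  have INFv: "(INF k. F k) = (if 4 * a * c \<le> 1 then sqrt c else 1 / (2 * sqrt a))"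
  proof (cases "4*a*c \<le> 1")
    case True
    have "(INF k. F k) = sqrt c"
      by (rule cInf_eq_minimum[where z="sqrt c"]) (use Fr lo1[OF True] in auto)
    then show ?thesis using True by simp
  next
    case False
    have bb: "bdd_below (range F)" using lo2 False by (intro bdd_belowI[of _ "1/(2* sqrt a)"]) auto
    have "(INF k. F k) \<le> 1/(2* sqrt a)"
      by (rule tendsto_le[OF trivial_limit_at_top_linorder lim tendsto_const])
         (rule always_eventually, rule allI, rule cINF_lower[OF bb], simp)
    moreover have "1/(2* sqrt a) \<le> (INF k. F k)"
      by (rule cINF_greatest) (use lo2 False in auto)
    ultimately show ?thesis using False by simp
  qed
  have SUPv: "(SUP k. F k) = (if 4 * a * c < 1 then 1 / (2 * sqrt a) else sqrt c)"
  proof (cases "4*a*c < 1")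
    case False
    have "(SUP k. F k) = sqrt c"
      by (rule cSup_eq_maximum[where z="sqrt c"]) (use Fr hi2 False in auto)
    then show ?thesis using False by simp
  next
    case True
    have bb: "bdd_above (range F)" using hi1 True by (intro bdd_aboveI[of _ "1/(2* sqrt a)"]) auto
    have "1/(2* sqrt a) \<le> (SUP k. F k)"
      by (rule tendsto_le[OF trivial_limit_at_top_linorder tendsto_const lim])
         (rule always_eventually, rule allI, rule cSUP_upper[OF _ bb], simp)
    moreover have "(SUP k. F k) \<le> 1/(2* sqrt a)"
      by (rule cSUP_least) (use hi1 True in auto)
    ultimately show ?thesis using True by simp
  qed
  show ?thesis unfolding RF INFv SUPv by (intro conjI refl)
qed

end
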